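(* Let $G$ and $H$ be connected graphs with no self-loops. Then $G$ and $H$ are strongly disjoint if and only if they are weakly disjoint and exactly one of the two graphs is a tree.
   Context: A weight function on a finite set $U$ is a map $\alpha:U\times U\to\mathbb{R}$ with $\alpha\ge 0$, $\alpha(u,u')=\alpha(u',u)$, and $\sum_{u,u'}\alpha(u,u')=1$; its degree function is $p(u)=\sum_{u'}\alpha(u,u')$. A graph is $G=(U,\alpha)$ with $U$ finite; edges are pairs $(u,u')$ with $\alpha(u,u')>0$; a self-loop is an edge $(u,u)$. $G$ is connected if any two distinct vertices are joined by a path of edges; a tree is a connected graph (viewed as an undirected graph) with no cycles. For graphs $G=(U,\alpha)$, $H=(V,\beta)$ with degree functions $p,q$, a weight joining is a weight function $\gamma$ on $U\times V$ whose degree function $r(u,v)=\sum_{(u',v')}\gamma((u,v),(u',v'))$ satisfies (a) $\sum_v r(u,v)=p(u)$, $\sum_u r(u,v)=q(v)$, and (b) $p(u)\sum_{\tilde v}\gamma((u,v),(u',\tilde v))=\alpha(u,u')r(u,v)$ and $q(v)\sum_{\tilde u}\gamma((u,v),(\tilde u,v'))=\beta(v,v')r(u,v)$ for all $u,u',v,v'$. A graph joining is $K=(U\times V,\gamma)$ with $\gamma$ a weight joining; $\mathcal{J}(G,H)$ is the set of graph joinings. The tensor product is $G\otimes H=(U\times V,\alpha\otimes\beta)$ with $(\alpha\otimes\beta)((u,v),(u',v'))=\alpha(u,u')\beta(v,v')$; it always lies in $\mathcal{J}(G,H)$. $G,H$ are strongly disjoint if $\mathcal{J}(G,H)=\{G\otimes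 H\}$, and weakly disjoint if every $K\in\mathcal{J}(G,H)$ has degree function $r(u,v)=p(u)q(v)$. *)

theory Defs
  imports Main "HOL-Analysis.Analysis"
begin

text \<open>A graph G = (U, alpha) with U finite is modelled by a finite type 'a (U = UNIV)
  and a weight function alpha :: 'a => 'a => real.\<close>

definition weight_fun :: "('a::finite \<Rightarrow> 'a \<Rightarrow> real) \<Rightarrow> bool" where
  "weight_fun \<alpha> \<longleftrightarrow> (\<forall>u u'. 0 \<le> \<alpha> u u') \<and> (\<forall>u u'. \<alpha> u u' = \<alpha> u' u)
      \<and> (\<Sum>u\<in>UNIV. \<Sum>u'\<in>UNIV. \<alpha> u u') = 1"

definition deg :: "('a::finite \<Rightarrow> 'a \<Rightarrow> real) \<Rightarrow> 'a \<Rightarrow> real" where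
  "deg \<alpha> u = (\<Sum>u'\<in>UNIV. \<alpha> u u')"

definition edges :: "('a \<Rightarrow> 'a \<Rightarrow> real) \<Rightarrow> ('a \<times> 'a) set" where
  "edges \<alpha> = {(u, u'). \<alpha> u u' > 0}"

definition no_self_loops :: "('a \<Rightarrow> 'a \<Rightarrow> real) \<Rightarrow> bool" where
  "no_self_loops \<alpha> \<longleftrightarrow> (\<forall>u. (u, u) \<notin> edges \<alpha>)"

definition graph_connected :: "('a \<Rightarrow> 'a \<Rightarrow> real) \<Rightarrow> bool" where
  "graph_connected \<alpha> \<longleftrightarrow> (\<forall>u v. u \<noteq> v \<longrightarrow> (u, v) \<in> (edges \<alpha>)\<^sup>*)"

definition has_cycle :: "('a \<Rightarrow> 'a \<Rightarrow> real) \<Rightarrow> bool" where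
  "has_cycle \<alpha> \<longleftrightarrow> (\<exists>u. (u, u) \<in> edges \<alpha>) \<or>
     (\<exists>vs. length vs \<ge> 3 \<and> distinct vs
        \<and> (\<forall>i. Suc i < length vs \<longrightarrow> (vs ! i, vs ! Suc i) \<in> edges \<alpha>)
        \<and> (last vs, hd vs) \<in> edges \<alpha>)"

definition is_tree :: "('a \<Rightarrow> 'a \<Rightarrow> real) \<Rightarrow> bool" where
  "is_tree \<alpha> \<longleftrightarrow> graph_connected \<alpha> \<and> \<not> has_cycle \<alpha>"

definition weight_joining ::
  "('a::finite \<Rightarrow> 'a \<Rightarrow> real) \<Rightarrow> ('b::finite \<Rightarrow> 'b \<Rightarrow> real)
     \<Rightarrow> ('a \<times> 'b \<Rightarrow> 'a \<times> 'b \<Rightarrow> real) \<Rightarrow> bool" where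
  "weight_joining \<alpha> \<beta> \<gamma> \<longleftrightarrow> weight_fun \<gamma>
     \<and> (\<forall>u. (\<Sum>v\<in>UNIV. deg \<gamma> (u, v)) = deg \<alpha> u)
     \<and> (\<forall>v. (\<Sum>u\<in>UNIV. deg \<gamma> (u, v)) = deg \<beta> v)
     \<and> (\<forall>u u' v. deg \<alpha> u * (\<Sum>v'\<in>UNIV. \<gamma> (u, v) (u', v')) = \<alpha> u u' * deg \<gamma> (u, v))
     \<and> (\<forall>u v v'. deg \<beta> v * (\<Sum>u'\<in>UNIV. \<gamma> (u, v) (u', v')) = \<beta> v v' * deg \<gamma> (u, v))"

definition tensor ::
  "('a \<Rightarrow> 'a \<Rightarrow> real) \<Rightarrow> ('b \<Rightarrow> 'b \<Rightarrow> real) \<Rightarrow> ('a \<times> 'b \<Rightarrow> 'a \<times> 'b \<Rightarrow> real)" where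
  "tensor \<alpha> \<beta> = (\<lambda>(u, v) (u', v'). \<alpha> u u' * \<beta> v v')"

definition strongly_disjoint ::
  "('a::finite \<Rightarrow> 'a \<Rightarrow> real) \<Rightarrow> ('b::finite \<Rightarrow> 'b \<Rightarrow> real) \<Rightarrow> bool" where
  "strongly_disjoint \<alpha> \<beta> \<longleftrightarrow> {\<gamma>. weight_joining \<alpha> \<beta> \<gamma>} = {tensor \<alpha> \<beta>}"

definition weakly_disjoint ::
  "('a::finite \<Rightarrow> 'a \<Rightarrow> real) \<Rightarrow> ('b::finite \<Rightarrow> 'b \<Rightarrow> real) \<Rightarrow> bool" where
  "weakly_disjoint \<alpha> \<beta> \<longleftrightarrow> (\<forall>\<gamma>. weight_joining \<alpha> \<beta> \<gamma> \<longrightarrow>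
     (\<forall>u v. deg \<gamma> (u, v) = deg \<alpha> u * deg \<beta> v))"

end

theory Submission
  imports Defs
begin

lemma sum_prod_UNIV:
  fixes f :: "('a::finite \<times> 'b::finite) \<Rightarrow> real"
  shows "(\<Sum>x\<in>UNIV. f x) = (\<Sum>a\<in>UNIV. \<Sum>b\<in>UNIV. f (a,b))"
  by (simp add: UNIV_Times_UNIV[symmetric] sum.cartesian_product del: UNIV_Times_UNIV)

lemma wf_nonneg: "weight_fun \<alpha> \<Longrightarrow> 0 \<le> \<alpha> x y" by (simp add: weight_fun_def)
lemma wf_sym: "weight_fun \<alpha> \<Longrightarrow> \<alpha> x y = \<alpha> y x" by (simp add: weight_fun_def)
lemma wf_sum: "weight_fun \<alpha> \<Longrightarrow> (\<Sum>x\<in>UNIV. deg \<alpha> x) = 1" by (simp add: weight_fun_def deg_def)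

lemma deg_tensor:
  "deg (tensor \<alpha> \<beta>) (u,v) = deg \<alpha> u * deg \<beta> v"
  by (simp add: deg_def tensor_def sum_prod_UNIV sum_product)

lemma tensor_joining:
  assumes a: "weight_fun \<alpha>" and b: "weight_fun \<beta>"
  shows "weight_joining \<alpha> \<beta> (tensor \<alpha> \<beta>)"
proof -
  have wf: "weight_fun (tensor \<alpha> \<beta>)"
    unfolding weight_fun_def
  proof (intro conjI allI)
    fix x y show "0 \<le> tensor \<alpha> \<beta> x y" using wf_nonneg[OF a] wf_nonneg[OF b]
      by (auto simp: tensor_def split: prod.splits)
    show "tensor \<alpha> \<beta> x y = tensor \<alpha> \<beta> y x" using wf_sym[OF a] wf_sym[OF b]
      by (auto simp: tensor_def split: prod.splits)
  next
    have "(\<Sum>x\<in>UNIV. \<Sum>y\<in>UNIV. tensor \<alpha> \<beta> x y) = (\<Sum>x\<in>UNIV. deg (tensor \<alpha> \<beta>) x)"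
      by (simp add: deg_def)
    also have "\<dots> = (\<Sum>u\<in>UNIV. \<Sum>v\<in>UNIV. deg \<alpha> u * deg \<beta> v)"
      by (simp add: sum_prod_UNIV deg_tensor)
    also have "\<dots> = 1" using wf_sum[OF a] wf_sum[OF b]
      by (simp add: sum_product[symmetric])
    finally show "(\<Sum>x\<in>UNIV. \<Sum>y\<in>UNIV. tensor \<alpha> \<beta> x y) = 1" .
  qed
  show ?thesis unfolding weight_joining_def
    using wf wf_sum[OF a] wf_sum[OF b]
    by (simp add: deg_tensor sum_distrib_left[symmetric] sum_distrib_right[symmetric])
       (simp add: tensor_def deg_def sum_distrib_left sum_distrib_right mult.commute)
qed

lemma nb_cycle:
  fixes E :: "('a::finite \<times> 'a) set" and S :: "'s set" and e :: "'s \<Rightarrow> 'a \<times> 'a"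
  assumes st: "st \<in> S" and inE: "\<forall>s\<in>S. e s \<in> E"
    and nx: "\<forall>s\<in>S. \<exists>s'\<in>S. fst (e s') = snd (e s) \<and> snd (e s') \<noteq> fst (e s)"
    and nl: "\<forall>x. (x,x) \<notin> E"
  shows "\<exists>vs. length vs \<ge> 3 \<and> distinct vs \<and> (\<forall>i. Suc i < length vs \<longrightarrow> (vs!i, vs!Suc i) \<in> E)
           \<and> (last vs, hd vs) \<in> E"
proof -
  obtain nxt where nxt: "\<forall>s\<in>S. nxt s \<in> S \<and> fst (e (nxt s)) = snd (e s) \<and> snd (e (nxt s)) \<noteq> fst (e s)"
    using nx by metis
  define w where "w n = (nxt ^^ n) st" for n
  have wS: "w n \<in> S" for n by (induction n) (auto simp: w_def st nxt)
  have wsuc: "w (Suc n) = nxt (w n)" for n by (simp add: w_def)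
  define x where "x n = fst (e (w n))" for n
  have xE: "(x n, x (Suc n)) \<in> E" for n
  proof -
    have "e (w n) \<in> E" using inE wS by blast
    moreover have "snd (e (w n)) = x (Suc n)" using nxt wS by (simp add: x_def wsuc)
    ultimately show ?thesis by (metis x_def prod.collapse)
  qed
  have xnb: "x (Suc (Suc n)) \<noteq> x n" for n
  proof -
    have "x (Suc (Suc n)) = snd (e (w (Suc n)))" using nxt wS by (simp add: x_def wsuc)
    also have "\<dots> \<noteq> fst (e (w n))" using nxt wS by (simp add: wsuc)
    finally show ?thesis by (simp add: x_def)
  qed
  have "\<not> inj x"
  proof
    assume "inj x"
    then have "finite (UNIV::nat set)" using finite_imageD[of x UNIV] by simp
    then show False by simp
  qed
  then obtain i j where ij: "i \<noteq> j" "x i = x j" unfolding inj_def by blast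
  define P where "P j \<longleftrightarrow> (\<exists>i<j. x i = x j)" for j
  have "\<exists>j. P j" using ij unfolding P_def by (metis linorder_neqE_nat)
  define j0 where "j0 = (LEAST j. P j)"
  have Pj0: "P j0" unfolding j0_def using \<open>\<exists>j. P j\<close> by (metis LeastI_ex)
  then obtain i0 where i0: "i0 < j0" "x i0 = x j0" unfolding P_def by blast
  have dist: "x a \<noteq> x b" if "a < b" "b < j0" for a b
  proof
    assume "x a = x b"
    then have "P b" unfolding P_def using that by blast
    then have "j0 \<le> b" unfolding j0_def by (rule Least_le)
    then show False using that by simp
  qed
  define vs where "vs = map (\<lambda>k. x (i0 + k)) [0..<j0-i0]"
  have len: "length vs = j0 - i0" by (simp add: vs_def)
  have ne1: "j0 - i0 \<noteq> 1"
  proof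
    assume "j0 - i0 = 1" then have "j0 = Suc i0" by simp
    then show False using i0 xE[of i0] nl by metis
  qed
  have ne2: "j0 - i0 \<noteq> 2"
  proof
    assume "j0 - i0 = 2" then have "j0 = Suc (Suc i0)" by simp
    then show False using i0 xnb[of i0] by metis
  qed
  have "length vs \<ge> 3" using len ne1 ne2 i0 by linarith
  moreover have "distinct vs" unfolding vs_def distinct_map
  proof
    show "inj_on (\<lambda>k. x (i0 + k)) (set [0..<j0 - i0])"
    proof (rule inj_onI)
      fix a b assume "a \<in> set [0..<j0 - i0]" "b \<in> set [0..<j0 - i0]" "x (i0 + a) = x (i0 + b)"
      then show "a = b" using dist[of "i0+a" "i0+b"] dist[of "i0+b" "i0+a"]
        by (metis add_less_cancel_left atLeastLessThan_iff less_diff_conv linorder_neqE_nat set_upt add.commute)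
    qed
  qed simp
  moreover have "\<forall>i. Suc i < length vs \<longrightarrow> (vs!i, vs!Suc i) \<in> E"
    using xE by (simp add: vs_def len)
  moreover have "(last vs, hd vs) \<in> E"
  proof -
    have nz: "vs \<noteq> []" using len i0 by auto
    have "last vs = vs ! (j0 - i0 - 1)" using nz by (simp add: last_conv_nth len)
    also have "\<dots> = x (i0 + (j0 - i0 - 1))" unfolding vs_def using i0 by (subst nth_map) auto
    finally have "last vs = x (i0 + (j0 - i0 - 1))" .
    moreover have "hd vs = x j0" using nz i0 by (simp add: hd_conv_nth vs_def)
    moreover have "Suc (i0 + (j0 - i0 - 1)) = j0" using i0 by simp
    ultimately show ?thesis using xE[of "i0 + (j0 - i0 - 1)"] by simp
  qed
  ultimately show ?thesis by blast
qed

lemma sum_other_nz: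
  fixes f :: "'a::finite \<Rightarrow> real"
  assumes "(\<Sum>z\<in>UNIV. f z) = 0" "f x \<noteq> 0"
  shows "\<exists>z. z \<noteq> x \<and> f z \<noteq> 0"
proof (rule ccontr)
  assume "\<not> ?thesis"
  then have "(\<Sum>z\<in>UNIV. f z) = f x + (\<Sum>z\<in>UNIV-{x}. f z)"
    and "(\<Sum>z\<in>UNIV-{x}. f z) = 0" by (auto simp: sum.remove intro!: sum.neutral)
  then show False using assms by simp
qed

lemma tree_zero:
  fixes \<alpha> A :: "'a::finite \<Rightarrow> 'a \<Rightarrow> real"
  assumes nc: "\<not> has_cycle \<alpha>" and sym: "\<forall>x y. \<alpha> x y = \<alpha> y x"
    and supp: "\<forall>x y. A x y \<noteq> 0 \<longrightarrow> (x,y) \<in> edges \<alpha>"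
    and row: "\<forall>x. (\<Sum>y\<in>UNIV. A x y) = 0"
    and col: "\<forall>y. (\<Sum>x\<in>UNIV. A x y) = 0"
  shows "A x y = 0"
proof (rule ccontr)
  assume nz: "A x y \<noteq> 0"
  define S where "S = {(a,b,c). if c then A b a \<noteq> 0 else A a b \<noteq> 0}"
  define e where "e = (\<lambda>(a::'a,b::'a,c::bool). (a,b))"
  have symE: "(a,b) \<in> edges \<alpha> \<Longrightarrow> (b,a) \<in> edges \<alpha>" for a b
    using sym by (simp add: edges_def)
  have "\<exists>vs. length vs \<ge> 3 \<and> distinct vs \<and> (\<forall>i. Suc i < length vs \<longrightarrow> (vs!i, vs!Suc i) \<in> edges \<alpha>)
           \<and> (last vs, hd vs) \<in> edges \<alpha>"
  proof (rule nb_cycle[where st="(x,y,False)" and S=S and e=e])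
    show "(x, y, False) \<in> S" using nz by (simp add: S_def)
    show "\<forall>s\<in>S. e s \<in> edges \<alpha>" using supp symE by (auto simp: S_def e_def split: if_splits)
    show "\<forall>a. (a, a) \<notin> edges \<alpha>" using nc by (auto simp: has_cycle_def)
    show "\<forall>s\<in>S. \<exists>s'\<in>S. fst (e s') = snd (e s) \<and> snd (e s') \<noteq> fst (e s)"
    proof
      fix s assume "s \<in> S"
      then obtain a b c where s: "s = (a,b,c)" and sc: "if c then A b a \<noteq> 0 else A a b \<noteq> 0"
        by (cases s) (auto simp: S_def)
      show "\<exists>s'\<in>S. fst (e s') = snd (e s) \<and> snd (e s') \<noteq> fst (e s)"
      proof (cases c)
        case True
        then obtain z where "z \<noteq> a" "A b z \<noteq> 0" using sum_other_nz[of "A b" a] row sc by auto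
        then show ?thesis using True s by (intro bexI[of _ "(b,z,False)"]) (auto simp: S_def e_def)
      next
        case False
        then obtain z where "z \<noteq> a" "A z b \<noteq> 0" using sum_other_nz[of "\<lambda>z. A z b" a] col sc by auto
        then show ?thesis using False s by (intro bexI[of _ "(b,z,True)"]) (auto simp: S_def e_def)
      qed
    qed
  qed
  then show False using nc by (simp add: has_cycle_def)
qed

lemma tree_coloring:
  fixes \<alpha> :: "'a::finite \<Rightarrow> 'a \<Rightarrow> real"
  assumes sym: "\<forall>x y. \<alpha> x y = \<alpha> y x" and tr: "is_tree \<alpha>"
  shows "\<exists>c::'a\<Rightarrow>bool. \<forall>x y. (x,y) \<in> edges \<alpha> \<longrightarrow> c x \<noteq> c y"
proof -
  define E where "E = edges \<alpha>"
  have symE: "(a,b) \<in> E \<Longrightarrow> (b,a) \<in> E" for a b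
    using sym by (simp add: edges_def E_def)
  have nc: "\<not> has_cycle \<alpha>" and conn: "graph_connected \<alpha>" using tr by (auto simp: is_tree_def)
  have nl: "(a,a) \<notin> E" for a using nc by (auto simp: has_cycle_def E_def)
  define r :: 'a where "r = undefined"
  have reach: "\<exists>n. (r,u) \<in> E ^^ n" for u
  proof (cases "r = u")
    case True then show ?thesis by (metis relpow.simps(1) pair_in_Id_conv)
  next
    case False then have "(r,u) \<in> E\<^sup>*" using conn by (simp add: graph_connected_def E_def)
    then show ?thesis by (simp add: rtrancl_power)
  qed
  define d where "d u = (LEAST n. (r,u) \<in> E ^^ n)" for u
  have D1: "(r,u) \<in> E ^^ d u" for u unfolding d_def using reach[of u] by (rule LeastI_ex)
  have D2: "(r,u) \<in> E ^^ n \<Longrightarrow> d u \<le> n" for u n unfolding d_def by (rule Least_le)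
  have D3: "(u,u') \<in> E \<Longrightarrow> d u' \<le> Suc (d u)" for u u'
    using D2 relpow_Suc_I[OF D1] by blast
  have SP: "\<exists>f. f 0 = r \<and> f (d u) = u \<and> (\<forall>i<d u. (f i, f (Suc i)) \<in> E) \<and> (\<forall>i\<le>d u. d (f i) = i)" for u
  proof -
    obtain f where f: "f 0 = r" "f (d u) = u" "\<forall>i<d u. (f i, f (Suc i)) \<in> E"
      using D1[of u] unfolding relpow_fun_conv by blast
    have "d (f i) = i" if i: "i \<le> d u" for i
    proof -
      have p1: "(r, f i) \<in> E ^^ i" unfolding relpow_fun_conv using f i
        by (intro exI[of _ f]) auto
      have p2: "(f i, u) \<in> E ^^ (d u - i)" unfolding relpow_fun_conv using f i
        by (intro exI[of _ "\<lambda>k. f (i+k)"]) auto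
      have "\<not> d (f i) < i"
      proof
        assume lt: "d (f i) < i"
        have "(r, u) \<in> E ^^ (d (f i) + (d u - i))" unfolding relpow_add
          using D1[of "f i"] p2 by blast
        then have "d u \<le> d (f i) + (d u - i)" by (rule D2)
        then show False using lt i by linarith
      qed
      then show ?thesis using D2[OF p1] by linarith
    qed
    then show ?thesis using f by blast
  qed
  have neq: "d u \<noteq> d u'" if e: "(u,u') \<in> E" for u u'
  proof
    assume eq: "d u = d u'"
    define n where "n = d u"
    obtain f where f: "f 0 = r" "f n = u" "\<forall>i<n. (f i, f (Suc i)) \<in> E" "\<forall>i\<le>n. d (f i) = i"
      using SP[of u] unfolding n_def by blast
    obtain g where g: "g 0 = r" "g n = u'" "\<forall>i<n. (g i, g (Suc i)) \<in> E" "\<forall>i\<le>n. d (g i) = i"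
      using SP[of u'] eq unfolding n_def by auto
    have uu: "u \<noteq> u'" using nl e by blast
    define J where "J = {k. k \<le> n \<and> f k = g k}"
    have finJ: "finite J" unfolding J_def by simp
    have "0 \<in> J" using f g by (simp add: J_def)
    define j where "j = Max J"
    have jJ: "j \<in> J" unfolding j_def using finJ \<open>0 \<in> J\<close> by (intro Max_in) auto
    have jmax: "k \<in> J \<Longrightarrow> k \<le> j" for k unfolding j_def using finJ by simp
    have jn: "j < n" using jJ f g uu by (auto simp: J_def order.order_iff_strict)
    have fgj: "f j = g j" using jJ by (simp add: J_def)
    define L where "L = 2*(n-j)+1"
    define h where "h i = (if i \<le> n - j then f (j+i) else g (2*n - j + 1 - i))" for i
    define vs where "vs = map h [0..<L]"
    have len: "length vs = L" by (simp add: vs_def)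
    have nth: "i < L \<Longrightarrow> vs ! i = h i" for i by (simp add: vs_def)
    have dh1: "i \<le> n - j \<Longrightarrow> d (h i) = j + i" for i using f(4) jn by (simp add: h_def)
    have dh2: "d (h i) = 2*n - j + 1 - i" if "n - j < i" "i < L" for i
    proof -
      have "h i = g (2*n - j + 1 - i)" using that by (simp add: h_def)
      moreover have "2*n - j + 1 - i \<le> n" using that jn unfolding L_def by linarith
      ultimately show ?thesis using g(4) by simp
    qed
    have hinj: "a = b" if ab: "a < L" "b < L" "h a = h b" "a \<le> b" for a b
    proof (cases "b \<le> n - j")
      case True
      then have "d (h a) = j + a" "d (h b) = j + b" using dh1 ab(4) by auto
      then show ?thesis using ab(3) by (metis add_left_cancel)
    next
      case False
      show ?thesis
      proof (cases "a \<le> n - j")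
        case False2: False
        have "d (h a) = 2*n - j + 1 - a" by (rule dh2) (use False2 ab in auto)
        moreover have "d (h b) = 2*n - j + 1 - b" by (rule dh2) (use False ab in auto)
        ultimately have "2*n - j + 1 - a = 2*n - j + 1 - b" using ab(3) by metis
        then show ?thesis using ab jn unfolding L_def by linarith
      next
        case True
        define k where "k = 2*n - j + 1 - b"
        have hb: "h b = g k" using False by (simp add: h_def k_def)
        have ha: "h a = f (j+a)" using True by (simp add: h_def)
        have "d (h a) = j + a" using dh1 True by simp
        moreover have "d (h b) = k" using dh2[of b] False ab unfolding k_def by simp
        ultimately have "j + a = k" using ab by simp
        then have "f k = g k" using ha hb ab by simp
        moreover have "k \<le> n" "j < k" using False ab jn unfolding k_def L_def by linarith+
        ultimately have "k \<in> J" by (simp add: J_def)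
        then show ?thesis using jmax \<open>j < k\<close> by fastforce
      qed
    qed
    have hinj2: "a = b" if "a \<in> set [0..<L]" "b \<in> set [0..<L]" "h a = h b" for a b
    proof (cases "a \<le> b")
      case True then show ?thesis using hinj that by simp
    next
      case False then show ?thesis using hinj[of b a] that by simp
    qed
    have "length vs \<ge> 3" using len jn by (simp add: L_def)
    moreover have "distinct vs" unfolding vs_def distinct_map
    proof
      show "inj_on h (set [0..<L])"
        by (rule inj_onI) (rule hinj2)
    qed simp
    moreover have "\<forall>i. Suc i < length vs \<longrightarrow> (vs!i, vs!Suc i) \<in> E"
    proof (intro allI impI)
      fix i assume i: "Suc i < length vs"
      then have eq2: "vs ! i = h i" "vs ! Suc i = h (Suc i)" using nth len by auto
      consider "Suc i \<le> n - j" | "i = n - j" | "n - j < i" by linarith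
      then show "(vs!i, vs!Suc i) \<in> E"
      proof cases
        case 1 then show ?thesis using eq2 f(3) by (simp add: h_def)
      next
        case 2 then show ?thesis using eq2 f(2) g(2) e jn by (simp add: h_def)
      next
        case 3
        define m where "m = 2*n - j - i"
        have "m < n" using 3 i len jn unfolding m_def L_def by linarith
        moreover have "h i = g (Suc m)" using 3 i len jn unfolding m_def h_def L_def
          by (simp add: Suc_diff_le)
        moreover have "h (Suc i) = g m" using 3 i len jn unfolding m_def h_def L_def
          by simp
        ultimately show ?thesis using eq2 g(3) symE by auto
      qed
    qed
    moreover have "(last vs, hd vs) \<in> E"
    proof -
      have nz: "vs \<noteq> []" using len by (auto simp: L_def)
      have "last vs = vs ! (L - 1)" using nz by (simp add: last_conv_nth len)
      also have "\<dots> = h (L - 1)" using nth by (simp add: L_def)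
      also have "\<dots> = g (2*n - j + 1 - (L - 1))" using jn by (simp add: h_def L_def)
      also have "2*n - j + 1 - (L - 1) = Suc j" using jn unfolding L_def by linarith
      finally have l: "last vs = g (Suc j)" .
      have "hd vs = h 0" using nz nth by (simp add: hd_conv_nth L_def)
      then have "hd vs = g j" using fgj by (simp add: h_def)
      then show ?thesis using l g(3) jn symE by auto
    qed
    ultimately show False using nc unfolding has_cycle_def E_def by blast
  qed
  show ?thesis
  proof (intro exI[of _ "\<lambda>u. even (d u)"] allI impI)
    fix x y assume e: "(x,y) \<in> edges \<alpha>"
    then have "(x,y) \<in> E" "(y,x) \<in> E" using symE by (auto simp: E_def)
    then have "d y \<le> Suc (d x)" "d x \<le> Suc (d y)" "d x \<noteq> d y" using D3 neq by auto
    then have "d y = Suc (d x) \<or> d x = Suc (d y)" by linarith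
    then show "even (d x) \<noteq> even (d y)" by auto
  qed
qed

lemma cycle_circ:
  fixes \<alpha> :: "'a::finite \<Rightarrow> 'a \<Rightarrow> real"
  assumes sym: "\<forall>x y. \<alpha> x y = \<alpha> y x" and nl: "no_self_loops \<alpha>" and hc: "has_cycle \<alpha>"
  shows "\<exists>\<sigma>::'a\<Rightarrow>'a\<Rightarrow>real. (\<forall>x y. \<sigma> x y \<noteq> 0 \<longrightarrow> \<alpha> x y > 0) \<and> (\<forall>x y. \<sigma> y x = - \<sigma> x y)
     \<and> (\<forall>x. (\<Sum>y\<in>UNIV. \<sigma> x y) = 0) \<and> (\<exists>x y. \<sigma> x y \<noteq> 0)"
proof -
  obtain vs where vs: "length vs \<ge> 3" "distinct vs"
    "\<forall>i. Suc i < length vs \<longrightarrow> (vs!i, vs!Suc i) \<in> edges \<alpha>" "(last vs, hd vs) \<in> edges \<alpha>"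
    using hc nl unfolding has_cycle_def no_self_loops_def by blast
  define k where "k = length vs"
  define nxt where "nxt i = (if Suc i = k then 0 else Suc i)" for i
  have edge: "i < k \<Longrightarrow> \<alpha> (vs!i) (vs!nxt i) > 0" for i
  proof (cases "Suc i = k")
    case True
    assume "i < k"
    have "vs \<noteq> []" using vs(1) by auto
    moreover have "i = length vs - 1" using True by (simp add: k_def)
    ultimately have "last vs = vs ! i" by (simp add: last_conv_nth)
    moreover have "hd vs = vs ! 0" using \<open>vs \<noteq> []\<close> by (simp add: hd_conv_nth)
    ultimately show ?thesis using vs(4) True by (simp add: nxt_def edges_def)
  next
    case False
    assume "i < k"
    then show ?thesis using vs(3) False by (simp add: nxt_def edges_def k_def)
  qed
  define ind :: "bool \<Rightarrow> real" where "ind b = (if b then 1 else 0)" for b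
  define \<sigma> where "\<sigma> x y = (\<Sum>i<k. ind (x = vs!i \<and> y = vs!nxt i) - ind (y = vs!i \<and> x = vs!nxt i))" for x y
  have anti: "\<forall>x y. \<sigma> y x = - \<sigma> x y"
    by (simp add: \<sigma>_def sum_negf[symmetric] conj_commute)
  have supp: "\<forall>x y. \<sigma> x y \<noteq> 0 \<longrightarrow> \<alpha> x y > 0"
  proof (intro allI impI)
    fix x y assume "\<sigma> x y \<noteq> 0"
    then obtain i where i: "i < k" "ind (x = vs!i \<and> y = vs!nxt i) - ind (y = vs!i \<and> x = vs!nxt i) \<noteq> 0"
      unfolding \<sigma>_def by (meson lessThan_iff sum.neutral)
    then have "(x = vs!i \<and> y = vs!nxt i) \<or> (y = vs!i \<and> x = vs!nxt i)" by (auto simp: ind_def split: if_splits)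
    then show "\<alpha> x y > 0" using edge[OF i(1)] sym by metis
  qed
  have inner: "(\<Sum>y\<in>UNIV. ind (x = a \<and> y = b)) = ind (x = a)" for x a b :: 'a
    by (cases "x = a") (simp_all add: ind_def)
  have inner2: "(\<Sum>y\<in>UNIV. ind (y = a \<and> x = b)) = ind (x = b)" for x a b :: 'a
    by (cases "x = b") (simp_all add: ind_def)
  have kpos: "k = Suc (k - 1)" using vs(1) by (simp add: k_def)
  have shift: "(\<Sum>i<k. f (nxt i)) = (\<Sum>i<k. f i)" for f :: "nat \<Rightarrow> real"
  proof -
    define m where "m = k - 1"
    have km: "k = Suc m" using kpos m_def by simp
    have "(\<Sum>i<k. f (nxt i)) = (\<Sum>i<m. f (nxt i)) + f (nxt m)" by (simp add: km)
    also have "(\<Sum>i<m. f (nxt i)) = (\<Sum>i<m. f (Suc i))"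
      by (intro sum.cong) (auto simp: nxt_def km)
    also have "f (nxt m) = f 0" by (simp add: nxt_def km)
    also have "(\<Sum>i<m. f (Suc i)) + f 0 = (\<Sum>i<k. f i)" unfolding km sum.lessThan_Suc_shift by simp
    finally show ?thesis .
  qed
  have row: "\<forall>x. (\<Sum>y\<in>UNIV. \<sigma> x y) = 0"
  proof
    fix x
    have "(\<Sum>y\<in>UNIV. \<sigma> x y) = (\<Sum>i<k. \<Sum>y\<in>UNIV. ind (x = vs!i \<and> y = vs!nxt i) - ind (y = vs!i \<and> x = vs!nxt i))"
      unfolding \<sigma>_def by (rule sum.swap)
    also have "\<dots> = (\<Sum>i<k. ind (x = vs!i) - ind (x = vs!nxt i))"
      by (simp add: sum_subtractf inner inner2)
    also have "\<dots> = 0" using shift[of "\<lambda>i. ind (x = vs!i)"] by (simp add: sum_subtractf)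
    finally show "(\<Sum>y\<in>UNIV. \<sigma> x y) = 0" .
  qed
  have "\<sigma> (vs!0) (vs!1) = (\<Sum>i<k. if i = 0 then 1 else 0)"
    unfolding \<sigma>_def
  proof (intro sum.cong refl)
    fix i assume "i \<in> {..<k}"
    then have i: "i < k" by simp
    have k3: "0 < k" "1 < k" "2 < k" using vs(1) by (auto simp: k_def)
    have e0: "(vs!0 = vs!i) = (i = 0)" using vs(2) i k3 by (simp add: nth_eq_iff_index_eq k_def)
    have e1: "(vs!1 = vs!i) = (i = 1)" using vs(2) i k3 by (auto simp: nth_eq_iff_index_eq k_def)
    have n0: "nxt 0 = 1" using k3 by (simp add: nxt_def)
    have n1: "nxt 1 = 2" using k3 by (simp add: nxt_def)
    have "vs!0 \<noteq> vs!2" using vs(2) k3 by (simp add: nth_eq_iff_index_eq k_def)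
    then show "ind (vs!0 = vs!i \<and> vs!1 = vs!nxt i) - ind (vs!1 = vs!i \<and> vs!0 = vs!nxt i)
        = (if i = 0 then 1 else 0)"
      using e0 e1 n0 n1 by (auto simp: ind_def)
  qed
  also have "\<dots> = 1" using kpos by simp
  finally have "\<exists>x y. \<sigma> x y \<noteq> 0" by (metis zero_neq_one)
  then show ?thesis using anti supp row by blast
qed

lemma min_pos:
  fixes \<alpha> :: "'a::finite \<Rightarrow> 'a \<Rightarrow> real"
  assumes "\<alpha> x0 y0 > 0"
  shows "\<exists>a>0. \<forall>x y. \<alpha> x y > 0 \<longrightarrow> a \<le> \<alpha> x y"
proof -
  define A where "A = (\<lambda>(x,y). \<alpha> x y) ` {(x,y). 0 < \<alpha> x y}"
  have fin: "finite A" unfolding A_def by simp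
  have ne: "\<alpha> x0 y0 \<in> A" using assms unfolding A_def by force
  have "Min A \<in> A" using fin ne by (intro Min_in) auto
  then have "Min A > 0" unfolding A_def by auto
  moreover have "\<forall>x y. \<alpha> x y > 0 \<longrightarrow> Min A \<le> \<alpha> x y"
    using fin unfolding A_def by (auto intro!: Min_le)
  ultimately show ?thesis by blast
qed

lemma abs_le_S:
  fixes \<sigma> :: "'a::finite \<Rightarrow> 'a \<Rightarrow> real"
  shows "\<bar>\<sigma> x y\<bar> \<le> (\<Sum>a\<in>UNIV. \<Sum>b\<in>UNIV. \<bar>\<sigma> a b\<bar>)"
proof -
  have "\<bar>\<sigma> x y\<bar> \<le> (\<Sum>b\<in>UNIV. \<bar>\<sigma> x b\<bar>)" by (rule member_le_sum) auto
  also have "\<dots> \<le> (\<Sum>a\<in>UNIV. \<Sum>b\<in>UNIV. \<bar>\<sigma> a b\<bar>)"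
    by (rule member_le_sum[of x UNIV "\<lambda>a. \<Sum>b\<in>UNIV. \<bar>\<sigma> a b\<bar>"]) (auto intro: sum_nonneg)
  finally show ?thesis .
qed

lemma perturb:
  fixes \<alpha> :: "'a::finite \<Rightarrow> 'a \<Rightarrow> real" and \<beta> :: "'b::finite \<Rightarrow> 'b \<Rightarrow> real"
    and \<sigma> :: "'a \<Rightarrow> 'a \<Rightarrow> real" and \<tau> :: "'b \<Rightarrow> 'b \<Rightarrow> real"
  assumes a: "weight_fun \<alpha>" and b: "weight_fun \<beta>"
    and s1: "\<forall>x y. \<sigma> x y \<noteq> 0 \<longrightarrow> \<alpha> x y > 0" and s2: "\<forall>x y. \<sigma> y x = - \<sigma> x y"
    and s3: "\<forall>x. (\<Sum>y\<in>UNIV. \<sigma> x y) = 0" and s4: "\<sigma> x0 y0 \<noteq> 0"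
    and t1: "\<forall>x y. \<tau> x y \<noteq> 0 \<longrightarrow> \<beta> x y > 0" and t2: "\<forall>x y. \<tau> y x = - \<tau> x y"
    and t3: "\<forall>x. (\<Sum>y\<in>UNIV. \<tau> x y) = 0" and t4: "\<tau> z0 w0 \<noteq> 0"
  shows "\<exists>\<gamma>. weight_joining \<alpha> \<beta> \<gamma> \<and> \<gamma> \<noteq> tensor \<alpha> \<beta>"
proof -
  obtain ma where ma: "ma > 0" "\<forall>x y. \<alpha> x y > 0 \<longrightarrow> ma \<le> \<alpha> x y"
    using min_pos[of \<alpha> x0 y0] s1 s4 by blast
  obtain mb where mb: "mb > 0" "\<forall>x y. \<beta> x y > 0 \<longrightarrow> mb \<le> \<beta> x y"
    using min_pos[of \<beta> z0 w0] t1 t4 by blast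
  define SG where "SG = (\<Sum>a\<in>UNIV. \<Sum>b\<in>UNIV. \<bar>\<sigma> a b\<bar>)"
  define SH where "SH = (\<Sum>a\<in>UNIV. \<Sum>b\<in>UNIV. \<bar>\<tau> a b\<bar>)"
  have SG: "\<bar>\<sigma> x y\<bar> \<le> SG" for x y unfolding SG_def by (rule abs_le_S)
  have SH: "\<bar>\<tau> x y\<bar> \<le> SH" for x y unfolding SH_def by (rule abs_le_S)
  have SG0: "0 \<le> SG" using SG[of x0 y0] by simp
  have SH0: "0 \<le> SH" using SH[of z0 w0] by simp
  define \<epsilon> where "\<epsilon> = ma * mb / ((1 + SG) * (1 + SH))"
  have \<epsilon>0: "\<epsilon> > 0" unfolding \<epsilon>_def using ma mb SG0 SH0 by simp
  define \<gamma> where "\<gamma> = (\<lambda>(u::'a,v::'b) (u',v'). \<alpha> u u' * \<beta> v v' + \<epsilon> * \<sigma> u u' * \<tau> v v')"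
  have \<gamma>: "\<gamma> (u,v) (u',v') = \<alpha> u u' * \<beta> v v' + \<epsilon> * \<sigma> u u' * \<tau> v v'" for u v u' v'
    by (simp add: \<gamma>_def)
  have nonneg: "0 \<le> \<gamma> (u,v) (u',v')" for u v u' v'
  proof (cases "\<sigma> u u' = 0 \<or> \<tau> v v' = 0")
    case True then show ?thesis using wf_nonneg[OF a] wf_nonneg[OF b] by (auto simp: \<gamma>)
  next
    case False
    then have pa: "\<alpha> u u' \<ge> ma" and pb: "\<beta> v v' \<ge> mb" using s1 t1 ma mb by auto
    have f1: "\<bar>\<sigma> u u'\<bar> / (1 + SG) \<le> 1" using SG[of u u'] SG0 by simp
    have f2: "\<bar>\<tau> v v'\<bar> / (1 + SH) \<le> 1" using SH[of v v'] SH0 by simp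
    have "\<bar>\<epsilon> * \<sigma> u u' * \<tau> v v'\<bar> = ma * mb * ((\<bar>\<sigma> u u'\<bar> / (1 + SG)) * (\<bar>\<tau> v v'\<bar> / (1 + SH)))"
      unfolding \<epsilon>_def using ma mb SG0 SH0 by (simp add: abs_mult field_simps)
    also have "\<dots> \<le> ma * mb * 1"
      using f1 f2 ma mb SG0 SH0 by (intro mult_left_mono mult_le_one) auto
    also have "\<dots> \<le> \<alpha> u u' * \<beta> v v'" using pa pb ma mb by (simp add: mult_mono)
    finally show ?thesis unfolding \<gamma> by linarith
  qed
  have sg0: "(\<Sum>u'\<in>UNIV. c * \<sigma> u u') = 0" for u c using s3 by (simp add: sum_distrib_left[symmetric])
  have rowv: "(\<Sum>v'\<in>UNIV. \<gamma> (u,v) (u',v')) = \<alpha> u u' * deg \<beta> v" for u v u'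
    by (simp add: \<gamma> sum.distrib deg_def sum_distrib_left[symmetric] t3)
  have rowu: "(\<Sum>u'\<in>UNIV. \<gamma> (u,v) (u',v')) = deg \<alpha> u * \<beta> v v'" for u v v'
  proof -
    have "(\<Sum>u'\<in>UNIV. \<gamma> (u,v) (u',v')) = (\<Sum>u'\<in>UNIV. \<alpha> u u' * \<beta> v v') + (\<Sum>u'\<in>UNIV. (\<epsilon> * \<tau> v v') * \<sigma> u u')"
      by (simp add: \<gamma> sum.distrib mult_ac)
    also have "\<dots> = deg \<alpha> u * \<beta> v v'" using sg0[where u=u and c="\<epsilon> * \<tau> v v'"]
      by (simp add: deg_def sum_distrib_right)
    finally show ?thesis .
  qed
  have degg: "deg \<gamma> (u,v) = deg \<alpha> u * deg \<beta> v" for u v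
  proof -
    have "deg \<gamma> (u,v) = (\<Sum>u'\<in>UNIV. \<Sum>v'\<in>UNIV. \<gamma> (u,v) (u',v'))" by (simp add: deg_def sum_prod_UNIV)
    also have "\<dots> = deg \<alpha> u * deg \<beta> v" by (simp add: rowv deg_def sum_distrib_right)
    finally show ?thesis .
  qed
  have wfg: "weight_fun \<gamma>" unfolding weight_fun_def
  proof (intro conjI allI)
    fix x y show "0 \<le> \<gamma> x y" using nonneg by (cases x, cases y) simp
    obtain u v u' v' where xy: "x = (u,v)" "y = (u',v')" by (cases x, cases y) auto
    have "\<sigma> u' u * \<tau> v' v = \<sigma> u u' * \<tau> v v'" using s2 t2 by (metis minus_mult_minus)
    then show "\<gamma> x y = \<gamma> y x" using wf_sym[OF a, of u u'] wf_sym[OF b, of v v']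
      unfolding xy \<gamma> by (simp add: mult.assoc)
  next
    have "(\<Sum>x\<in>UNIV. \<Sum>y\<in>UNIV. \<gamma> x y) = (\<Sum>x\<in>UNIV. deg \<gamma> x)" by (simp add: deg_def)
    also have "\<dots> = (\<Sum>u\<in>UNIV. \<Sum>v\<in>UNIV. deg \<alpha> u * deg \<beta> v)" by (simp add: sum_prod_UNIV degg)
    also have "\<dots> = 1" using wf_sum[OF a] wf_sum[OF b] by (simp add: sum_product[symmetric])
    finally show "(\<Sum>x\<in>UNIV. \<Sum>y\<in>UNIV. \<gamma> x y) = 1" .
  qed
  have j: "weight_joining \<alpha> \<beta> \<gamma>" unfolding weight_joining_def
    using wfg wf_sum[OF a] wf_sum[OF b]
    by (simp add: degg rowv rowu sum_distrib_left[symmetric] sum_distrib_right[symmetric])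
  have "\<gamma> (x0,z0) (y0,w0) \<noteq> tensor \<alpha> \<beta> (x0,z0) (y0,w0)"
    using \<epsilon>0 s4 t4 by (simp add: \<gamma> tensor_def)
  then have "\<gamma> \<noteq> tensor \<alpha> \<beta>" by metis
  then show ?thesis using j by blast
qed

lemma exists_pos:
  fixes f :: "'a::finite \<Rightarrow> real"
  assumes "(\<Sum>x\<in>UNIV. f x) > 0" shows "\<exists>x. f x > 0"
proof (rule ccontr)
  assume "\<not> ?thesis" then have "(\<Sum>x\<in>UNIV. f x) \<le> 0" by (intro sum_nonpos) (auto simp: not_less)
  then show False using assms by simp
qed

lemma sum_mult3: "(\<Sum>x\<in>A. (a::real) * f x * b) = a * sum f A * b"
  by (induct A rule: infinite_finite_induct) (auto simp: algebra_simps)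

lemma color_mass:
  fixes \<alpha> :: "'a::finite \<Rightarrow> 'a \<Rightarrow> real" and c :: "'a \<Rightarrow> bool"
  assumes a: "weight_fun \<alpha>" and col: "\<forall>x y. (x,y) \<in> edges \<alpha> \<longrightarrow> c x \<noteq> c y"
  shows "(\<Sum>x\<in>UNIV. if c x = b then deg \<alpha> x else 0) = 1/2"
proof -
  define S where "S b = (\<Sum>x\<in>UNIV. if c x = b then deg \<alpha> x else 0)" for b
  define T where "T b = (\<Sum>x\<in>UNIV. \<Sum>y\<in>UNIV. if c x = b \<and> c y \<noteq> b then \<alpha> x y else 0)" for b
  have z: "c x = c y \<Longrightarrow> \<alpha> x y = 0" for x y
    using col wf_nonneg[OF a, of x y] by (force simp: edges_def)
  have ST: "S b = T b" for b unfolding S_def T_def deg_def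
    by (intro sum.cong refl) (auto intro!: sum.cong simp: z)
  have TT: "T (\<not> b) = T b"
  proof -
    have "T (\<not> b) = (\<Sum>x\<in>UNIV. \<Sum>y\<in>UNIV. if c x \<noteq> b \<and> c y = b then \<alpha> x y else 0)"
      unfolding T_def by (intro sum.cong refl) auto
    also have "\<dots> = (\<Sum>y\<in>UNIV. \<Sum>x\<in>UNIV. if c x \<noteq> b \<and> c y = b then \<alpha> x y else 0)"
      by (rule sum.swap)
    also have "\<dots> = T b" unfolding T_def
    proof (intro sum.cong refl)
      fix x y
      show "(if c y \<noteq> b \<and> c x = b then \<alpha> y x else 0) = (if c x = b \<and> c y \<noteq> b then \<alpha> x y else 0)"
        using wf_sym[OF a, of x y] by auto
    qed
    finally show ?thesis .
  qed
  have "S b + S (\<not> b) = (\<Sum>x\<in>UNIV. deg \<alpha> x)" unfolding S_def sum.distrib[symmetric]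
    by (intro sum.cong refl) auto
  then have "S b + S (\<not> b) = 1" using wf_sum[OF a] by simp
  then show ?thesis using ST TT unfolding S_def by simp
qed

lemma bipartite_joining:
  fixes \<alpha> :: "'a::finite \<Rightarrow> 'a \<Rightarrow> real" and \<beta> :: "'b::finite \<Rightarrow> 'b \<Rightarrow> real"
    and cg :: "'a \<Rightarrow> bool" and ch :: "'b \<Rightarrow> bool"
  assumes a: "weight_fun \<alpha>" and b: "weight_fun \<beta>"
    and cG: "\<forall>x y. (x,y) \<in> edges \<alpha> \<longrightarrow> cg x \<noteq> cg y"
    and cH: "\<forall>x y. (x,y) \<in> edges \<beta> \<longrightarrow> ch x \<noteq> ch y"
  shows "\<exists>\<gamma>. weight_joining \<alpha> \<beta> \<gamma> \<and> \<gamma> \<noteq> tensor \<alpha> \<beta>"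
proof -
  define \<gamma> where "\<gamma> = (\<lambda>(u::'a,v::'b) (u',v'). if cg u = ch v then 2 * \<alpha> u u' * \<beta> v v' else 0)"
  have \<gamma>: "\<gamma> (u,v) (u',v') = (if cg u = ch v then 2 * \<alpha> u u' * \<beta> v v' else 0)" for u v u' v'
    by (simp add: \<gamma>_def)
  have massH: "(\<Sum>v\<in>UNIV. if cg u = ch v then deg \<beta> v else 0) = 1/2" for u
  proof -
    have "(\<Sum>v\<in>UNIV. if cg u = ch v then deg \<beta> v else 0) = (\<Sum>v\<in>UNIV. if ch v = cg u then deg \<beta> v else 0)"
      by (intro sum.cong refl) auto
    then show ?thesis using color_mass[OF b cH, of "cg u"] by simp
  qed
  have massG: "(\<Sum>u\<in>UNIV. if cg u = ch v then deg \<alpha> u else 0) = 1/2" for v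
    using color_mass[OF a cG, of "ch v"] by simp
  have rowv: "(\<Sum>v'\<in>UNIV. \<gamma> (u,v) (u',v')) = (if cg u = ch v then 2 * \<alpha> u u' * deg \<beta> v else 0)" for u v u'
    by (simp add: \<gamma> deg_def sum_distrib_left)
  have rowu: "(\<Sum>u'\<in>UNIV. \<gamma> (u,v) (u',v')) = (if cg u = ch v then 2 * deg \<alpha> u * \<beta> v v' else 0)" for u v v'
  proof -
    have "(\<Sum>u'\<in>UNIV. 2 * \<alpha> u u' * \<beta> v v') = (\<Sum>u'\<in>UNIV. \<alpha> u u' * (2 * \<beta> v v'))"
      by (intro sum.cong) (simp_all add: mult_ac)
    also have "\<dots> = (\<Sum>u'\<in>UNIV. \<alpha> u u') * (2 * \<beta> v v')"
      by (rule sum_distrib_right[symmetric])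
    finally have "(\<Sum>u'\<in>UNIV. 2 * \<alpha> u u' * \<beta> v v') = (\<Sum>u'\<in>UNIV. \<alpha> u u') * (2 * \<beta> v v')" .
    then show ?thesis by (simp add: \<gamma> deg_def)
  qed
  have degg: "deg \<gamma> (u,v) = (if cg u = ch v then 2 * deg \<alpha> u * deg \<beta> v else 0)" for u v
  proof -
    have "deg \<gamma> (u,v) = (\<Sum>u'\<in>UNIV. \<Sum>v'\<in>UNIV. \<gamma> (u,v) (u',v'))" by (simp add: deg_def sum_prod_UNIV)
    also have "\<dots> = (if cg u = ch v then 2 * deg \<alpha> u * deg \<beta> v else 0)"
      by (cases "cg u = ch v") (simp_all add: rowv sum_mult3 deg_def[of \<alpha> u])
    finally show ?thesis .
  qed
  have margu: "(\<Sum>v\<in>UNIV. deg \<gamma> (u,v)) = deg \<alpha> u" for u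
  proof -
    have "(\<Sum>v\<in>UNIV. deg \<gamma> (u,v)) = (\<Sum>v\<in>UNIV. 2 * deg \<alpha> u * (if cg u = ch v then deg \<beta> v else 0))"
      by (intro sum.cong refl) (simp add: degg)
    also have "\<dots> = 2 * deg \<alpha> u * (1/2)" by (simp add: sum_distrib_left[symmetric] massH)
    finally show ?thesis by simp
  qed
  have margv: "(\<Sum>u\<in>UNIV. deg \<gamma> (u,v)) = deg \<beta> v" for v
  proof -
    have "(\<Sum>u\<in>UNIV. deg \<gamma> (u,v)) = (\<Sum>u\<in>UNIV. 2 * deg \<beta> v * (if cg u = ch v then deg \<alpha> u else 0))"
      by (intro sum.cong refl) (simp add: degg)
    also have "\<dots> = 2 * deg \<beta> v * (1/2)" by (simp add: sum_distrib_left[symmetric] massG)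
    finally show ?thesis by simp
  qed
  have wfg: "weight_fun \<gamma>" unfolding weight_fun_def
  proof (intro conjI allI)
    fix x y :: "'a \<times> 'b"
    obtain u v u' v' where xy: "x = (u,v)" "y = (u',v')" by (cases x, cases y) auto
    show "0 \<le> \<gamma> x y" using wf_nonneg[OF a, of u u'] wf_nonneg[OF b, of v v'] by (simp add: xy \<gamma>)
    show "\<gamma> x y = \<gamma> y x"
    proof (cases "\<alpha> u u' > 0 \<and> \<beta> v v' > 0")
      case True
      then have "cg u \<noteq> cg u'" "ch v \<noteq> ch v'" using cG cH by (auto simp: edges_def)
      then have "(cg u = ch v) = (cg u' = ch v')" by blast
      then show ?thesis using wf_sym[OF a, of u u'] wf_sym[OF b, of v v'] by (simp add: xy \<gamma>)
    next
      case False
      then have "\<alpha> u u' = 0 \<or> \<beta> v v' = 0" using wf_nonneg[OF a, of u u'] wf_nonneg[OF b, of v v'] by auto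
      then show ?thesis using wf_sym[OF a, of u u'] wf_sym[OF b, of v v'] by (auto simp: xy \<gamma>)
    qed
  next
    have "(\<Sum>x\<in>UNIV. \<Sum>y\<in>UNIV. \<gamma> x y) = (\<Sum>x\<in>UNIV. deg \<gamma> x)" by (simp add: deg_def)
    also have "\<dots> = (\<Sum>u\<in>UNIV. deg \<alpha> u)" by (simp add: sum_prod_UNIV margu)
    also have "\<dots> = 1" using wf_sum[OF a] .
    finally show "(\<Sum>x\<in>UNIV. \<Sum>y\<in>UNIV. \<gamma> x y) = 1" .
  qed
  have j: "weight_joining \<alpha> \<beta> \<gamma>" unfolding weight_joining_def
    using wfg margu margv by (simp add: rowv rowu degg)
  obtain v0 v0' where e0: "\<beta> v0 v0' > 0"
  proof -
    have "(\<Sum>x\<in>UNIV. deg \<beta> x) > 0" using wf_sum[OF b] by simp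
    then obtain x where "deg \<beta> x > 0" using exists_pos by blast
    then obtain y where "\<beta> x y > 0" using exists_pos[of "\<beta> x"] by (auto simp: deg_def)
    then show ?thesis using that by blast
  qed
  obtain u0 where u0: "cg u0 \<noteq> ch v0" "deg \<alpha> u0 > 0"
  proof -
    have "(\<Sum>u\<in>UNIV. if cg u = (\<not> ch v0) then deg \<alpha> u else 0) > 0"
      using color_mass[OF a cG, of "\<not> ch v0"] by simp
    then obtain u where "(if cg u = (\<not> ch v0) then deg \<alpha> u else 0) > 0" using exists_pos by blast
    then show ?thesis using that by (auto split: if_splits)
  qed
  obtain u0' where e1: "\<alpha> u0 u0' > 0" using u0 exists_pos[of "\<alpha> u0"] by (auto simp: deg_def)
  have "\<gamma> (u0,v0) (u0',v0') \<noteq> tensor \<alpha> \<beta> (u0,v0) (u0',v0')"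
    using u0 e0 e1 by (simp add: \<gamma> tensor_def)
  then have "\<gamma> \<noteq> tensor \<alpha> \<beta>" by metis
  then show ?thesis using j by blast
qed

lemma weak_tree_unique:
  fixes \<alpha> :: "'a::finite \<Rightarrow> 'a \<Rightarrow> real" and \<beta> :: "'b::finite \<Rightarrow> 'b \<Rightarrow> real"
  assumes a: "weight_fun \<alpha>" and b: "weight_fun \<beta>" and j: "weight_joining \<alpha> \<beta> \<gamma>"
    and wd: "\<forall>u v. deg \<gamma> (u, v) = deg \<alpha> u * deg \<beta> v"
    and tr: "is_tree \<alpha> \<or> is_tree \<beta>"
  shows "\<gamma> = tensor \<alpha> \<beta>"
proof -
  have wg: "weight_fun \<gamma>" using j by (simp add: weight_joining_def)
  have gnn: "0 \<le> \<gamma> x y" for x y using wf_nonneg[OF wg] .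
  have gsym: "\<gamma> x y = \<gamma> y x" for x y using wf_sym[OF wg] .
  have j1: "deg \<alpha> u * (\<Sum>v'\<in>UNIV. \<gamma> (u, v) (u', v')) = \<alpha> u u' * deg \<gamma> (u, v)" for u u' v
    using j by (simp add: weight_joining_def)
  have j2: "deg \<beta> v * (\<Sum>u'\<in>UNIV. \<gamma> (u, v) (u', v')) = \<beta> v v' * deg \<gamma> (u, v)" for u v v'
    using j by (simp add: weight_joining_def)
  have gz: "\<gamma> (u,v) x = 0" if "deg \<gamma> (u,v) = 0" for u v x
  proof -
    have "\<forall>x\<in>UNIV. \<gamma> (u,v) x = 0" using that gnn unfolding deg_def
      by (subst sum_nonneg_eq_0_iff[symmetric]) auto
    then show ?thesis by (cases x) simp
  qed
  have R1: "(\<Sum>v'\<in>UNIV. \<gamma> (u, v) (u', v')) = \<alpha> u u' * deg \<beta> v" for u u' v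
  proof (cases "deg \<alpha> u = 0")
    case True
    then have "\<forall>y\<in>UNIV. \<alpha> u y = 0" using wf_nonneg[OF a] unfolding deg_def
      by (subst sum_nonneg_eq_0_iff[symmetric]) auto
    moreover have "deg \<gamma> (u,v) = 0" using wd True by simp
    ultimately show ?thesis using gz by simp
  next
    case False
    then show ?thesis using j1[of u v u'] wd by (simp add: mult.left_commute)
  qed
  have R2: "(\<Sum>u'\<in>UNIV. \<gamma> (u, v) (u', v')) = deg \<alpha> u * \<beta> v v'" for u v v'
  proof (cases "deg \<beta> v = 0")
    case True
    then have "\<forall>y\<in>UNIV. \<beta> v y = 0" using wf_nonneg[OF b] unfolding deg_def
      by (subst sum_nonneg_eq_0_iff[symmetric]) auto
    moreover have "deg \<gamma> (u,v) = 0" using wd True by simp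
    ultimately show ?thesis using gz by simp
  next
    case False
    then show ?thesis using j2[of v u v'] wd by (simp add: mult_ac)
  qed
  have suppA: "\<gamma> (u,v) (u',v') = 0" if "\<alpha> u u' = 0" for u v u' v'
  proof -
    have "\<forall>y\<in>UNIV. \<gamma> (u, v) (u', y) = 0" using R1[of u v u'] that gnn
      by (subst sum_nonneg_eq_0_iff[symmetric]) auto
    then show ?thesis by simp
  qed
  have suppB: "\<gamma> (u,v) (u',v') = 0" if "\<beta> v v' = 0" for u v u' v'
  proof -
    have "\<forall>y\<in>UNIV. \<gamma> (u, v) (y, v') = 0" using R2[of u v v'] that gnn
      by (subst sum_nonneg_eq_0_iff[symmetric]) auto
    then show ?thesis by simp
  qed
  have eq: "\<gamma> (u,v) (u',v') = \<alpha> u u' * \<beta> v v'" for u v u' v'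
  proof (cases "is_tree \<alpha>")
    case True
    define A where "A x y = \<gamma> (x,v) (y,v') - \<alpha> x y * \<beta> v v'" for x y
    have "A u u' = 0"
    proof (rule tree_zero[of \<alpha>])
      show "\<not> has_cycle \<alpha>" using True by (simp add: is_tree_def)
      show "\<forall>x y. \<alpha> x y = \<alpha> y x" using wf_sym[OF a] by blast
      show "\<forall>x y. A x y \<noteq> 0 \<longrightarrow> (x, y) \<in> edges \<alpha>"
      proof (intro allI impI)
        fix x y assume "A x y \<noteq> 0"
        then have "\<alpha> x y \<noteq> 0" using suppA unfolding A_def by force
        then show "(x, y) \<in> edges \<alpha>" using wf_nonneg[OF a, of x y] by (simp add: edges_def)
      qed
      show "\<forall>x. (\<Sum>y\<in>UNIV. A x y) = 0"
        by (simp add: A_def sum_subtractf R2 deg_def sum_distrib_right)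
      show "\<forall>y. (\<Sum>x\<in>UNIV. A x y) = 0"
      proof
        fix y
        have "(\<Sum>x\<in>UNIV. \<gamma> (x,v) (y,v')) = (\<Sum>x\<in>UNIV. \<gamma> (y,v') (x,v))" using gsym by simp
        also have "\<dots> = deg \<alpha> y * \<beta> v' v" by (rule R2)
        finally have 1: "(\<Sum>x\<in>UNIV. \<gamma> (x,v) (y,v')) = deg \<alpha> y * \<beta> v v'" using wf_sym[OF b, of v v'] by simp
        have 2: "(\<Sum>x\<in>UNIV. \<alpha> x y * \<beta> v v') = deg \<alpha> y * \<beta> v v'"
          using wf_sym[OF a] by (simp add: deg_def sum_distrib_right)
        show "(\<Sum>x\<in>UNIV. A x y) = 0" unfolding A_def sum_subtractf 1 2 by simp
      qed
    qed
    then show ?thesis by (simp add: A_def)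
  next
    case False
    then have Tb: "is_tree \<beta>" using tr by simp
    define A where "A x y = \<gamma> (u,x) (u',y) - \<alpha> u u' * \<beta> x y" for x y
    have "A v v' = 0"
    proof (rule tree_zero[of \<beta>])
      show "\<not> has_cycle \<beta>" using Tb by (simp add: is_tree_def)
      show "\<forall>x y. \<beta> x y = \<beta> y x" using wf_sym[OF b] by blast
      show "\<forall>x y. A x y \<noteq> 0 \<longrightarrow> (x, y) \<in> edges \<beta>"
      proof (intro allI impI)
        fix x y assume "A x y \<noteq> 0"
        then have "\<beta> x y \<noteq> 0" using suppB unfolding A_def by force
        then show "(x, y) \<in> edges \<beta>" using wf_nonneg[OF b, of x y] by (simp add: edges_def)
      qed
      show "\<forall>x. (\<Sum>y\<in>UNIV. A x y) = 0"
        by (simp add: A_def sum_subtractf R1 deg_def sum_distrib_left)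
      show "\<forall>y. (\<Sum>x\<in>UNIV. A x y) = 0"
      proof
        fix y
        have "(\<Sum>x\<in>UNIV. \<gamma> (u,x) (u',y)) = (\<Sum>x\<in>UNIV. \<gamma> (u',y) (u,x))" using gsym by simp
        also have "\<dots> = \<alpha> u' u * deg \<beta> y" by (rule R1)
        finally have 1: "(\<Sum>x\<in>UNIV. \<gamma> (u,x) (u',y)) = \<alpha> u u' * deg \<beta> y" using wf_sym[OF a, of u u'] by simp
        have 2: "(\<Sum>x\<in>UNIV. \<alpha> u u' * \<beta> x y) = \<alpha> u u' * deg \<beta> y"
          using wf_sym[OF b] by (simp add: deg_def sum_distrib_left)
        show "(\<Sum>x\<in>UNIV. A x y) = 0" unfolding A_def sum_subtractf 1 2 by simp
      qed
    qed
    then show ?thesis by (simp add: A_def)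
  qed
  show ?thesis
  proof (intro ext)
    fix x y :: "'a \<times> 'b"
    show "\<gamma> x y = tensor \<alpha> \<beta> x y" by (cases x, cases y) (simp add: eq tensor_def)
  qed
qed

theorem theorem5p5:
  fixes \<alpha> :: "'a::finite \<Rightarrow> 'a \<Rightarrow> real" and \<beta> :: "'b::finite \<Rightarrow> 'b \<Rightarrow> real"
  assumes "weight_fun \<alpha>" and "weight_fun \<beta>"
    and "graph_connected \<alpha>" and "graph_connected \<beta>"
    and "no_self_loops \<alpha>" and "no_self_loops \<beta>"
  shows "strongly_disjoint \<alpha> \<beta> \<longleftrightarrow>
           weakly_disjoint \<alpha> \<beta> \<and> (is_tree \<alpha> \<noteq> is_tree \<beta>)"
proof -
  have symA: "\<forall>x y. \<alpha> x y = \<alpha> y x" using wf_sym[OF assms(1)] by blast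
  have symB: "\<forall>x y. \<beta> x y = \<beta> y x" using wf_sym[OF assms(2)] by blast
  show ?thesis
proof
  assume sd: "strongly_disjoint \<alpha> \<beta>"
  then have uniq: "weight_joining \<alpha> \<beta> \<gamma> \<Longrightarrow> \<gamma> = tensor \<alpha> \<beta>" for \<gamma>
    unfolding strongly_disjoint_def by blast
  have "weakly_disjoint \<alpha> \<beta>" unfolding weakly_disjoint_def
    using uniq deg_tensor by metis
  moreover have "is_tree \<alpha> \<noteq> is_tree \<beta>"
  proof
    assume eqt: "is_tree \<alpha> = is_tree \<beta>"
    show False
    proof (cases "is_tree \<alpha>")
      case True
      obtain cg :: "'a \<Rightarrow> bool" where cg: "\<forall>x y. (x,y) \<in> edges \<alpha> \<longrightarrow> cg x \<noteq> cg y"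
        using tree_coloring[of \<alpha>] True symA by blast
      obtain ch :: "'b \<Rightarrow> bool" where ch: "\<forall>x y. (x,y) \<in> edges \<beta> \<longrightarrow> ch x \<noteq> ch y"
        using tree_coloring[of \<beta>] True eqt symB by blast
      show False using bipartite_joining[OF assms(1,2) cg ch] uniq by blast
    next
      case False
      then have hg: "has_cycle \<alpha>" and hh: "has_cycle \<beta>" using eqt assms(3,4)
        by (auto simp: is_tree_def)
      obtain \<sigma> :: "'a \<Rightarrow> 'a \<Rightarrow> real" where \<sigma>: "\<forall>x y. \<sigma> x y \<noteq> 0 \<longrightarrow> \<alpha> x y > 0" "\<forall>x y. \<sigma> y x = - \<sigma> x y"
        "\<forall>x. (\<Sum>y\<in>UNIV. \<sigma> x y) = 0" "\<exists>x y. \<sigma> x y \<noteq> 0"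
        using cycle_circ[of \<alpha>] symA assms(5) hg by blast
      obtain \<tau> :: "'b \<Rightarrow> 'b \<Rightarrow> real" where \<tau>: "\<forall>x y. \<tau> x y \<noteq> 0 \<longrightarrow> \<beta> x y > 0" "\<forall>x y. \<tau> y x = - \<tau> x y"
        "\<forall>x. (\<Sum>y\<in>UNIV. \<tau> x y) = 0" "\<exists>x y. \<tau> x y \<noteq> 0"
        using cycle_circ[of \<beta>] symB assms(6) hh by blast
      obtain x0 y0 where x0: "\<sigma> x0 y0 \<noteq> 0" using \<sigma>(4) by blast
      obtain z0 w0 where z0: "\<tau> z0 w0 \<noteq> 0" using \<tau>(4) by blast
      show False using perturb[OF assms(1,2) \<sigma>(1-3) x0 \<tau>(1-3) z0] uniq by blast
    qed
  qed
  ultimately show "weakly_disjoint \<alpha> \<beta> \<and> (is_tree \<alpha> \<noteq> is_tree \<beta>)" by blast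
next
  assume h: "weakly_disjoint \<alpha> \<beta> \<and> (is_tree \<alpha> \<noteq> is_tree \<beta>)"
  then have tr: "is_tree \<alpha> \<or> is_tree \<beta>" by blast
  have "weight_joining \<alpha> \<beta> \<gamma> \<Longrightarrow> \<gamma> = tensor \<alpha> \<beta>" for \<gamma>
    using weak_tree_unique[OF assms(1,2) _ _ tr] h unfolding weakly_disjoint_def by blast
  then show "strongly_disjoint \<alpha> \<beta>" unfolding strongly_disjoint_def
    using tensor_joining[OF assms(1,2)] by blast
qed
qed

end
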